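(* Let $\Delta\ge 3$ and $n\ge 3$. For every execution of the traversal procedure on $T_{n,\Delta}$, the number of edges of the output graph $G$ satisfies $$|E(G)| < \Bigl(2-\frac{1}{\Delta-1}\Bigr)n+\frac{\Delta-3}{2}.$$
   Context: Fix integers $\Delta\ge 3$ and $n\ge 3$, and put $b=\Delta-1$. The complete $\Delta$-ary tree $T_{n,\Delta}$ is the rooted tree on vertex set $\{1,\dots,n\}$ with root $1$ in which the children of a vertex $i$ are the integers $j$ with $b(i-1)+2\le j\le bi+1$ and $j\le n$ (equivalently, the parent of $j\ge 2$ is $\lfloor (j-2)/b\rfloor+1$). Thus every vertex has at most $\Delta-1$ children, all levels except possibly the last are full, and the last level is filled from the left. A leaf is a vertex other than the root having no children. Traversal procedure: start with edge set $E$ equal to the edge set of $T_{n,\Delta}$, all vertices unmarked, and $v_1=1$. For $k=1,\dots,n-1$: mark $v_k$; then (a) if $v_k\neq 1$ and the parent of $v_k$ is unmarked, let $v_{k+1}$ be the parent of $v_k$; (b) otherwise, if $v_k$ has an unmarked child, let $v_{k+1}$ be any unmarked child of $v_k$; (c) otherwise, let $v_{k+1}$ be any unmarked leaf $u$ and add the edge $\{v_k,u\}$ to $E$ (a "jump edge"). Finally mark $v_n$ and add the edge $\{v_n,1\}$ to $E$ (if not already present). The output is the simple graph $G=(\{1,\dots,n\},E)$. An execution is any run of this procedure, i.e. any admissible sequence of choices in (b) and (c). *)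

theory Defs
  imports Complex_Main
begin

text \<open>Complete Delta-ary tree on vertices 1..n, root 1, b = Delta - 1.
  Parent of j >= 2 is (j - 2) div b + 1.\<close>

definition tparent :: "nat \<Rightarrow> nat \<Rightarrow> nat" where
  "tparent \<Delta> j = (j - 2) div (\<Delta> - 1) + 1"

definition is_child :: "nat \<Rightarrow> nat \<Rightarrow> nat \<Rightarrow> nat \<Rightarrow> bool" where
  "is_child \<Delta> n i j \<longleftrightarrow> 2 \<le> j \<and> j \<le> n \<and> tparent \<Delta> j = i"

definition is_leaf :: "nat \<Rightarrow> nat \<Rightarrow> nat \<Rightarrow> bool" where
  "is_leaf \<Delta> n u \<longleftrightarrow> 2 \<le> u \<and> u \<le> n \<and> (\<nexists>j. is_child \<Delta> n u j)"

definition tree_edges :: "nat \<Rightarrow> nat \<Rightarrow> nat set set" where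
  "tree_edges \<Delta> n = {{tparent \<Delta> j, j} | j. 2 \<le> j \<and> j \<le> n}"

definition marked :: "(nat \<Rightarrow> nat) \<Rightarrow> nat \<Rightarrow> nat set" where
  "marked v k = v ` {1..k}"

definition case_a :: "nat \<Rightarrow> (nat \<Rightarrow> nat) \<Rightarrow> nat \<Rightarrow> bool" where
  "case_a \<Delta> v k \<longleftrightarrow> v k \<noteq> 1 \<and> tparent \<Delta> (v k) \<notin> marked v k"

definition case_b :: "nat \<Rightarrow> nat \<Rightarrow> (nat \<Rightarrow> nat) \<Rightarrow> nat \<Rightarrow> bool" where
  "case_b \<Delta> n v k \<longleftrightarrow> (\<exists>c. is_child \<Delta> n (v k) c \<and> c \<notin> marked v k)"

definition execution :: "nat \<Rightarrow> nat \<Rightarrow> (nat \<Rightarrow> nat) \<Rightarrow> bool" where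
  "execution \<Delta> n v \<longleftrightarrow> v 1 = 1 \<and>
     (\<forall>k. 1 \<le> k \<and> k \<le> n - 1 \<longrightarrow>
        (if case_a \<Delta> v k then v (Suc k) = tparent \<Delta> (v k)
         else if case_b \<Delta> n v k then is_child \<Delta> n (v k) (v (Suc k)) \<and> v (Suc k) \<notin> marked v k
         else is_leaf \<Delta> n (v (Suc k)) \<and> v (Suc k) \<notin> marked v k))"

definition jump_edges :: "nat \<Rightarrow> nat \<Rightarrow> (nat \<Rightarrow> nat) \<Rightarrow> nat set set" where
  "jump_edges \<Delta> n v = {{v k, v (Suc k)} | k. 1 \<le> k \<and> k \<le> n - 1 \<and>
                          \<not> case_a \<Delta> v k \<and> \<not> case_b \<Delta> n v k}"

definition output_edges :: "nat \<Rightarrow> nat \<Rightarrow> (nat \<Rightarrow> nat) \<Rightarrow> nat set set" where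
  "output_edges \<Delta> n v = tree_edges \<Delta> n \<union> jump_edges \<Delta> n v \<union> {{v n, 1}}"

end

theory Submission
  imports Defs
begin

lemma tparent_lt: "2 \<le> j \<Longrightarrow> 3 \<le> \<Delta> \<Longrightarrow> tparent \<Delta> j < j"
proof -
  assume a: "2 \<le> j" "3 \<le> \<Delta>"
  have "(j - 2) div (\<Delta> - 1) \<le> j - 2" by (rule div_le_dividend)
  thus ?thesis using a unfolding tparent_def by linarith
qed

lemma leaf_iff:
  assumes "3 \<le> \<Delta>" "2 \<le> n"
  shows "is_leaf \<Delta> n u \<longleftrightarrow> (n-2) div (\<Delta>-1) + 1 < u \<and> u \<le> n"
proof
  assume L: "is_leaf \<Delta> n u"
  show "(n-2) div (\<Delta>-1) + 1 < u \<and> u \<le> n"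
  proof (rule ccontr)
    assume "\<not> ?thesis"
    hence "u - 1 \<le> (n-2) div (\<Delta>-1)" "2 \<le> u" using L unfolding is_leaf_def by auto
    hence "(\<Delta>-1)*(u-1) \<le> (\<Delta>-1)*((n-2) div (\<Delta>-1))" by (intro mult_le_mono2)
    also have "\<dots> \<le> n - 2" by (rule times_div_less_eq_dividend)
    finally have "(\<Delta>-1)*(u-1) \<le> n - 2" .
    hence "is_child \<Delta> n u ((\<Delta>-1)*(u-1) + 2)"
      unfolding is_child_def tparent_def using assms \<open>2 \<le> u\<close> by auto
    thus False using L unfolding is_leaf_def by blast
  qed
next
  assume A: "(n-2) div (\<Delta>-1) + 1 < u \<and> u \<le> n"
  have "\<not> is_child \<Delta> n u j" for j
  proof
    assume "is_child \<Delta> n u j"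
    hence "j \<le> n" "(j-2) div (\<Delta>-1) + 1 = u" unfolding is_child_def tparent_def by auto
    moreover have "(j-2) div (\<Delta>-1) \<le> (n-2) div (\<Delta>-1)" using \<open>j \<le> n\<close> by (intro div_le_mono) auto
    ultimately show False using A by auto
  qed
  thus "is_leaf \<Delta> n u" unfolding is_leaf_def using A by auto
qed

lemma mono_chain:
  assumes "\<And>i. a \<le> i \<Longrightarrow> i < c \<Longrightarrow> (f::nat\<Rightarrow>nat) i < f (Suc i)"
  shows "a \<le> i \<Longrightarrow> i \<le> j \<Longrightarrow> j \<le> c \<Longrightarrow> f i \<le> f j"
proof (induction j)
  case 0 thus ?case by simp
next
  case (Suc j)
  show ?case
  proof (cases "i = Suc j")
    case False
    hence "f i \<le> f j" using Suc by auto
    also have "f j < f (Suc j)" using Suc False by (intro assms) auto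
    finally show ?thesis by simp
  qed simp
qed

theorem mainTheorem3:
  fixes \<Delta> n :: nat and v :: "nat \<Rightarrow> nat"
  assumes "\<Delta> \<ge> 3" and "n \<ge> 3" and "execution \<Delta> n v"
  shows "real (card (output_edges \<Delta> n v))
           < (2 - 1 / (real \<Delta> - 1)) * real n + (real \<Delta> - 3) / 2"
proof -
  define m where "m = (n-2) div (\<Delta>-1) + 1"
  define K where "K = {k. 1 \<le> k \<and> k \<le> n - 1 \<and> \<not> case_a \<Delta> v k \<and> \<not> case_b \<Delta> n v k}"
  define Lv where "Lv = {u. is_leaf \<Delta> n u}"
  have ex: "v 1 = 1" and step: "\<And>k. 1 \<le> k \<Longrightarrow> k \<le> n - 1 \<Longrightarrow>
        (if case_a \<Delta> v k then v (Suc k) = tparent \<Delta> (v k)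
         else if case_b \<Delta> n v k then is_child \<Delta> n (v k) (v (Suc k)) \<and> v (Suc k) \<notin> marked v k
         else is_leaf \<Delta> n (v (Suc k)) \<and> v (Suc k) \<notin> marked v k)"
    using assms(3) unfolding execution_def by auto
  have fresh: "v (Suc k) \<notin> marked v k" if "1 \<le> k" "k \<le> n - 1" for k
    using step[OF that] unfolding case_a_def by (auto split: if_splits)
  have Lv_eq: "Lv = {m<..n}" unfolding Lv_def m_def using leaf_iff[OF assms(1)] assms(2) by auto
  have cardL: "card Lv = n - m" using Lv_eq by simp
  have cardK: "card K \<le> n - m - 1"
  proof (cases "K = {}")
    case True thus ?thesis by simp
  next
    case False
    have finK: "finite K" unfolding K_def by auto
    define k0 where "k0 = Min K"
    have k0K: "k0 \<in> K" using False finK k0_def by simp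
    have k0min: "\<And>k. k \<in> K \<Longrightarrow> k0 \<le> k" using finK k0_def by simp
    have k0b: "1 \<le> k0" "k0 \<le> n - 1" using k0K K_def by auto
    have chain: "1 \<le> j \<Longrightarrow> j < k0 \<Longrightarrow> is_child \<Delta> n (v j) (v (Suc j))" for j
    proof (induction j)
      case 0 thus ?case by simp
    next
      case (Suc j)
      have na: "\<not> case_a \<Delta> v (Suc j)"
      proof (cases "j = 0")
        case True thus ?thesis using ex unfolding case_a_def by simp
      next
        case False
        hence "is_child \<Delta> n (v j) (v (Suc j))" using Suc by auto
        hence "tparent \<Delta> (v (Suc j)) = v j" unfolding is_child_def by simp
        moreover have "v j \<in> marked v (Suc j)" unfolding marked_def using False by auto
        ultimately show ?thesis unfolding case_a_def by simp
      qed
      have "Suc j \<notin> K" using Suc.prems k0min by force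
      hence "case_b \<Delta> n v (Suc j)" using na Suc.prems k0b unfolding K_def by auto
      thus ?case using step[of "Suc j"] na Suc.prems k0b by auto
    qed
    have incr: "\<And>i. 1 \<le> i \<Longrightarrow> i < k0 \<Longrightarrow> v i < v (Suc i)"
      using chain tparent_lt assms(1) unfolding is_child_def by fastforce
    have k0ge2: "2 \<le> k0"
    proof (rule ccontr)
      assume "\<not> 2 \<le> k0"
      hence "k0 = 1" using k0b by simp
      have "is_child \<Delta> n 1 2" unfolding is_child_def tparent_def using assms by simp
      moreover have "2 \<notin> marked v 1" unfolding marked_def using ex by simp
      ultimately have "case_b \<Delta> n v 1" unfolding case_b_def using ex by auto
      thus False using k0K \<open>k0 = 1\<close> unfolding K_def by simp
    qed
    have ch0: "is_child \<Delta> n (v (k0-1)) (v k0)" using chain[of "k0-1"] k0ge2 by simp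
    have nochild: "\<not> is_child \<Delta> n (v k0) c" for c
    proof
      assume c: "is_child \<Delta> n (v k0) c"
      hence "v k0 < c" using tparent_lt assms(1) unfolding is_child_def by fastforce
      have "c \<notin> marked v k0"
      proof
        assume "c \<in> marked v k0"
        then obtain i where "i \<in> {1..k0}" "c = v i" unfolding marked_def by auto
        hence "v i \<le> v k0" using mono_chain[of 1 k0 v, OF incr] by auto
        thus False using \<open>v k0 < c\<close> \<open>c = v i\<close> by simp
      qed
      hence "case_b \<Delta> n v k0" using c unfolding case_b_def by auto
      thus False using k0K unfolding K_def by simp
    qed
    have leaf0: "v k0 \<in> Lv" using ch0 nochild unfolding Lv_def is_leaf_def is_child_def by auto
    have inj: "inj_on (\<lambda>k. v (Suc k)) K"
    proof (rule inj_onI)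
      fix x y assume xy: "x \<in> K" "y \<in> K" "v (Suc x) = v (Suc y)"
      show "x = y"
      proof (rule ccontr)
        assume "x \<noteq> y"
        then consider "x < y" | "y < x" by linarith
        thus False
        proof cases
          case 1
          have "v (Suc x) \<in> marked v y" unfolding marked_def using 1 by auto
          thus False using fresh[of y] xy unfolding K_def by auto
        next
          case 2
          have "v (Suc y) \<in> marked v x" unfolding marked_def using 2 by auto
          thus False using fresh[of x] xy unfolding K_def by auto
        qed
      qed
    qed
    have img: "(\<lambda>k. v (Suc k)) ` K \<subseteq> Lv - {v k0}"
    proof
      fix u assume "u \<in> (\<lambda>k. v (Suc k)) ` K"
      then obtain k where k: "k \<in> K" "u = v (Suc k)" by auto
      have "is_leaf \<Delta> n u" using step[of k] k unfolding K_def by auto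
      moreover have "v k0 \<in> marked v k" using k0min[OF k(1)] k0b unfolding marked_def by auto
      hence "u \<noteq> v k0" using fresh[of k] k unfolding K_def by auto
      ultimately show "u \<in> Lv - {v k0}" unfolding Lv_def by auto
    qed
    have "card K = card ((\<lambda>k. v (Suc k)) ` K)" using card_image[OF inj] by simp
    also have "\<dots> \<le> card (Lv - {v k0})" using img Lv_eq by (intro card_mono) auto
    also have "\<dots> = n - m - 1" using leaf0 cardL Lv_eq by simp
    finally show ?thesis .
  qed
  have "tree_edges \<Delta> n = (\<lambda>j. {tparent \<Delta> j, j}) ` {2..n}" unfolding tree_edges_def by auto
  moreover have "card ((\<lambda>j. {tparent \<Delta> j, j}) ` {2..n}) \<le> card {2..n}" by (rule card_image_le) simp
  ultimately have "card (tree_edges \<Delta> n) \<le> card {2..n}" by simp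
  hence ct: "card (tree_edges \<Delta> n) \<le> n - 1" by simp
  have "jump_edges \<Delta> n v = (\<lambda>k. {v k, v (Suc k)}) ` K" unfolding jump_edges_def K_def by auto
  moreover have "finite K" unfolding K_def by auto
  ultimately have cj: "card (jump_edges \<Delta> n v) \<le> card K" by (simp add: card_image_le)
  have "card (output_edges \<Delta> n v) \<le> card (tree_edges \<Delta> n) + card (jump_edges \<Delta> n v) + card {{v n, 1}}"
    unfolding output_edges_def by (meson card_Un_le add_le_mono le_trans order_refl)
  hence ce: "card (output_edges \<Delta> n v) \<le> n - 1 + (n - m - 1) + 1" using ct cj cardK by simp
  have bm: "(\<Delta>-1) * m \<ge> n - 1"
  proof -
    have r: "(n-2) mod (\<Delta>-1) < \<Delta>-1" using assms(1) by simp
    have "n - 2 = (\<Delta>-1) * ((n-2) div (\<Delta>-1)) + (n-2) mod (\<Delta>-1)" by simp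
    hence "n - 2 < (\<Delta>-1) * ((n-2) div (\<Delta>-1) + 1)" using r by (simp add: algebra_simps)
    thus ?thesis unfolding m_def using assms(2) by linarith
  qed
  have mle: "m \<le> n - 1"
  proof -
    have "(n-2) div (\<Delta>-1) \<le> n-2" by (rule div_le_dividend)
    thus ?thesis unfolding m_def using assms by linarith
  qed
  define b where "b = real \<Delta> - 1"
  have b2: "b \<ge> 2" unfolding b_def using assms by simp
  have "real (n - 1) \<le> real ((\<Delta>-1) * m)" using bm by linarith
  hence bmr: "b * real m \<ge> real n - 1" unfolding b_def using assms by (simp add: of_nat_diff)
  have cer: "real (card (output_edges \<Delta> n v)) \<le> 2 * real n - real m - 1"
    using ce mle assms(2) by (simp add: of_nat_diff)
  have "real n / b - real m - 1 < 0"
  proof -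
    have "real n / b \<le> real m + 1 / b" using bmr b2 by (simp add: field_simps)
    moreover have "1 / b < 1" using b2 by simp
    ultimately show ?thesis by linarith
  qed
  moreover have "(real \<Delta> - 3) / 2 \<ge> 0" using assms by simp
  moreover have "(2 - 1 / (real \<Delta> - 1)) * real n = 2 * real n - real n / b"
    unfolding b_def by (simp add: field_simps)
  ultimately show ?thesis using cer by linarith
qed

end
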